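(* Let $G$ be a group and $N$ a fully invariant subgroup of $G$ (i.e. $\phi(N)\subseteq N$ for all $\phi\in\mathrm{End}(G)$; in particular $N$ is normal). For each $\phi\in\mathrm{End}(G)$ and each $\phi$-cellular automaton $\mathcal{T}:A^G\to A^G$, let $\widehat{\mathcal{T}}:A^{G/N}\to A^{G/N}$ be the unique $\hat\phi$-cellular automaton with $\rho^*\circ\widehat{\mathcal{T}}=\mathcal{T}\circ\rho^*$, where $\hat\phi(gN):=\phi(g)N$. Then the map $\mathcal{T}\mapsto\widehat{\mathcal{T}}$ from $\mathrm{GCA}(A^G)$ to $\mathrm{GCA}(A^{G/N})$ is a monoid homomorphism.
   Context: $A$ is a finite set with $|A|\ge 2$. $A^G$ is the set of functions $G\to A$ with shift action $(g\cdot x)(k):=x(g^{-1}k)$. For $\phi\in\mathrm{End}(G)$, a $\phi$-cellular automaton is a map $\mathcal{T}:A^G\to A^G$ for which there exist finite $T\subseteq G$ and $\mu:A^T\to A$ with $\mathcal{T}(x)(h)=\mu((\phi(h^{-1})\cdot x)|_T)$ for all $x,h$. $\mathrm{GCA}(A^G)$ is the monoid (under composition) of all $\phi$-cellular automata $A^G\to A^G$ over all $\phi\in\mathrm{End}(G)$. $\rho:G\to G/N$ is the canonical projection and $\rho^*:A^{G/N}\to A^G$, $\rho^*(x):=x\circ\rho$. *)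

theory Defs
  imports "HOL-Algebra.Algebra" "HOL-Library.FuncSet"
begin

definition configs :: "('h, 'm) monoid_scheme \<Rightarrow> 'a set \<Rightarrow> ('h \<Rightarrow> 'a) set" where
  "configs H A = carrier H \<rightarrow>\<^sub>E A"

definition shift :: "('h, 'm) monoid_scheme \<Rightarrow> 'h \<Rightarrow> ('h \<Rightarrow> 'a) \<Rightarrow> ('h \<Rightarrow> 'a)" where
  "shift H g x = (\<lambda>k\<in>carrier H. x (inv\<^bsub>H\<^esub> g \<otimes>\<^bsub>H\<^esub> k))"

definition phi_CA :: "('h, 'm) monoid_scheme \<Rightarrow> 'a set \<Rightarrow> ('h \<Rightarrow> 'h)
    \<Rightarrow> (('h \<Rightarrow> 'a) \<Rightarrow> ('h \<Rightarrow> 'a)) \<Rightarrow> bool" where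
  "phi_CA H A \<phi> T \<longleftrightarrow>
     T \<in> configs H A \<rightarrow>\<^sub>E configs H A \<and>
     (\<exists>S (\<mu> :: ('h \<Rightarrow> 'a) \<Rightarrow> 'a). finite S \<and> S \<subseteq> carrier H \<and>
        (\<forall>x\<in>configs H A. \<forall>h\<in>carrier H.
           T x h = \<mu> (restrict (shift H (\<phi> (inv\<^bsub>H\<^esub> h)) x) S)))"

definition GCA :: "('h, 'm) monoid_scheme \<Rightarrow> 'a set \<Rightarrow> (('h \<Rightarrow> 'a) \<Rightarrow> ('h \<Rightarrow> 'a)) set" where
  "GCA H A = {T. \<exists>\<phi>\<in>hom H H. phi_CA H A \<phi> T}"

text \<open>rho^*(x) = x o rho, rho(g) = gN (written as the coset N #> g, equal to gN as N is normal).\<close>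
definition rho_star :: "('g, 'm) monoid_scheme \<Rightarrow> 'g set \<Rightarrow> ('g set \<Rightarrow> 'a) \<Rightarrow> ('g \<Rightarrow> 'a)" where
  "rho_star G N y = (\<lambda>g\<in>carrier G. y (N #>\<^bsub>G\<^esub> g))"

definition hatCA :: "('g, 'm) monoid_scheme \<Rightarrow> 'g set \<Rightarrow> 'a set
    \<Rightarrow> (('g \<Rightarrow> 'a) \<Rightarrow> ('g \<Rightarrow> 'a)) \<Rightarrow> (('g set \<Rightarrow> 'a) \<Rightarrow> ('g set \<Rightarrow> 'a))" where
  "hatCA G N A T = (THE S. S \<in> GCA (G Mod N) A \<and>
      (\<forall>y\<in>configs (G Mod N) A. rho_star G N (S y) = T (rho_star G N y)))"

end

theory Submission
  imports Defs
begin

lemma hom_inv_gen: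
  assumes "group H" "f \<in> hom H H" "x \<in> carrier H"
  shows "f (inv\<^bsub>H\<^esub> x) = inv\<^bsub>H\<^esub> (f x)"
proof -
  interpret group_hom H H f using assms by (simp add: group_hom_def group_hom_axioms_def)
  show ?thesis using assms(3) by simp
qed

lemma phi_CA_compose:
  fixes H (structure)
  assumes H: "group H" and phi: "\<phi> \<in> hom H H" and psi: "\<psi> \<in> hom H H"
    and T1: "phi_CA H A \<phi> T1" and T2: "phi_CA H A \<psi> T2"
  shows "phi_CA H A (\<psi> \<circ> \<phi>) (compose (configs H A) T1 T2)"
proof -
  interpret group H by fact
  from T1 obtain S1 \<mu>1 where S1: "finite S1" "S1 \<subseteq> carrier H"
    and m1: "\<forall>x\<in>configs H A. \<forall>h\<in>carrier H.
           T1 x h = \<mu>1 (restrict (shift H (\<phi> (inv h)) x) S1)"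
    and T1f: "T1 \<in> configs H A \<rightarrow>\<^sub>E configs H A"
    unfolding phi_CA_def by blast
  from T2 obtain S2 \<mu>2 where S2: "finite S2" "S2 \<subseteq> carrier H"
    and m2: "\<forall>x\<in>configs H A. \<forall>h\<in>carrier H.
           T2 x h = \<mu>2 (restrict (shift H (\<psi> (inv h)) x) S2)"
    and T2f: "T2 \<in> configs H A \<rightarrow>\<^sub>E configs H A"
    unfolding phi_CA_def by blast
  have phic: "\<phi> x \<in> carrier H" if "x \<in> carrier H" for x using phi that by (rule hom_in_carrier)
  have psic: "\<psi> x \<in> carrier H" if "x \<in> carrier H" for x using psi that by (rule hom_in_carrier)
  define S where "S = (\<lambda>(s,t). \<psi> s \<otimes> t) ` (S1 \<times> S2)"
  define \<mu> where "\<mu> = (\<lambda>z. \<mu>1 (\<lambda>s\<in>S1. \<mu>2 (\<lambda>t\<in>S2. z (\<psi> s \<otimes> t))))"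
  have "finite S" using S1 S2 unfolding S_def by simp
  moreover have "S \<subseteq> carrier H" using S1 S2 psic unfolding S_def by auto
  moreover have "\<forall>x\<in>configs H A. \<forall>h\<in>carrier H.
           compose (configs H A) T1 T2 x h = \<mu> (restrict (shift H ((\<psi> \<circ> \<phi>) (inv h)) x) S)"
  proof (intro ballI)
    fix x h assume x: "x \<in> configs H A" and h: "h \<in> carrier H"
    define a where "a = inv (\<phi> (inv h))"
    have a: "a \<in> carrier H" using h phic unfolding a_def by simp
    have T2x: "T2 x \<in> configs H A" using T2f x by auto
    have "compose (configs H A) T1 T2 x h = T1 (T2 x) h" using x by (simp add: compose_def)
    also have "\<dots> = \<mu>1 (restrict (shift H (\<phi> (inv h)) (T2 x)) S1)" using m1 T2x h by blast
    also have "restrict (shift H (\<phi> (inv h)) (T2 x)) S1 = (\<lambda>s\<in>S1. T2 x (a \<otimes> s))"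
      by (rule restrict_ext) (use S1 in \<open>auto simp: shift_def a_def\<close>)
    also have "(\<lambda>s\<in>S1. T2 x (a \<otimes> s)) = (\<lambda>s\<in>S1. \<mu>2 (\<lambda>t\<in>S2. x (inv ((\<psi> \<circ> \<phi>) (inv h)) \<otimes> (\<psi> s \<otimes> t))))"
    proof (rule restrict_ext)
      fix s assume s: "s \<in> S1"
      hence sc: "s \<in> carrier H" using S1 by auto
      have "T2 x (a \<otimes> s) = \<mu>2 (restrict (shift H (\<psi> (inv (a \<otimes> s))) x) S2)"
        using m2 x a sc by blast
      also have "restrict (shift H (\<psi> (inv (a \<otimes> s))) x) S2
          = (\<lambda>t\<in>S2. x (inv ((\<psi> \<circ> \<phi>) (inv h)) \<otimes> (\<psi> s \<otimes> t)))"
      proof (rule restrict_ext)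
        fix t assume t: "t \<in> S2"
        hence tc: "t \<in> carrier H" using S2 by auto
        have "inv (\<psi> (inv (a \<otimes> s))) = \<psi> (a \<otimes> s)"
          using hom_inv_gen[OF H psi] a sc psic by simp
        also have "\<dots> = \<psi> a \<otimes> \<psi> s" using psi a sc by (simp add: hom_mult)
        also have "\<psi> a = inv ((\<psi> \<circ> \<phi>) (inv h))"
          unfolding a_def using hom_inv_gen[OF H psi] h phic by simp
        finally have e: "inv (\<psi> (inv (a \<otimes> s))) = inv ((\<psi> \<circ> \<phi>) (inv h)) \<otimes> \<psi> s" .
        show "shift H (\<psi> (inv (a \<otimes> s))) x t = x (inv ((\<psi> \<circ> \<phi>) (inv h)) \<otimes> (\<psi> s \<otimes> t))"
          unfolding shift_def using tc e h phic psic sc by (simp add: m_assoc)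
      qed
      finally show "T2 x (a \<otimes> s) = \<mu>2 (\<lambda>t\<in>S2. x (inv ((\<psi> \<circ> \<phi>) (inv h)) \<otimes> (\<psi> s \<otimes> t)))" .
    qed
    also have "\<mu>1 \<dots> = \<mu> (restrict (shift H ((\<psi> \<circ> \<phi>) (inv h)) x) S)"
      unfolding \<mu>_def
      apply (rule arg_cong[where f=\<mu>1])
      apply (rule restrict_ext)
      apply (rule arg_cong[where f=\<mu>2])
      apply (rule restrict_ext)
      using S1 S2 psic h phic unfolding S_def shift_def by (auto 0 4)
    finally show "compose (configs H A) T1 T2 x h = \<mu> (restrict (shift H ((\<psi> \<circ> \<phi>) (inv h)) x) S)" .
  qed
  moreover have "compose (configs H A) T1 T2 \<in> configs H A \<rightarrow>\<^sub>E configs H A"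
    using T1f T2f by (auto simp: compose_def)
  ultimately show ?thesis unfolding phi_CA_def by blast
qed

lemma phi_CA_id:
  fixes H (structure)
  assumes H: "group H"
  shows "phi_CA H A (\<lambda>x. x) (\<lambda>x\<in>configs H A. x)"
proof -
  interpret group H by fact
  have "\<forall>x\<in>configs H A. \<forall>h\<in>carrier H.
      (\<lambda>x\<in>configs H A. x) x h = (\<lambda>z. z \<one>) (restrict (shift H (inv h) x) {\<one>})"
    by (auto simp: shift_def)
  moreover have "(\<lambda>x\<in>configs H A. x) \<in> configs H A \<rightarrow>\<^sub>E configs H A" by auto
  ultimately show ?thesis unfolding phi_CA_def
    by (intro conjI exI[of _ "{\<one>}"] exI[of _ "\<lambda>z. z \<one>"]) auto
qed

lemma id_hom: "(\<lambda>x. x) \<in> hom H H"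
  by (auto simp: hom_def)

context normal
begin

lemma rho_star_configs:
  assumes "y \<in> configs (G Mod H) A"
  shows "rho_star G H y \<in> configs G A"
  using assms subset unfolding rho_star_def configs_def FactGroup_def
  by (auto intro: rcosetsI)

lemma rho_star_inj:
  assumes "z1 \<in> configs (G Mod H) A" "z2 \<in> configs (G Mod H) A"
    and "rho_star G H z1 = rho_star G H z2"
  shows "z1 = z2"
proof
  fix C
  show "z1 C = z2 C"
  proof (cases "C \<in> rcosets H")
    case True
    then obtain g where g: "g \<in> carrier G" "C = H #> g" unfolding RCOSETS_def by auto
    have "rho_star G H z1 g = rho_star G H z2 g" using assms(3) by simp
    thus ?thesis using g unfolding rho_star_def by simp
  next
    case False
    thus ?thesis using assms(1,2) unfolding configs_def FactGroup_def by (auto simp: PiE_def extensional_def)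
  qed
qed

lemma hat_unique:
  assumes "S1 \<in> GCA (G Mod H) A" "S2 \<in> GCA (G Mod H) A"
    and "\<forall>y\<in>configs (G Mod H) A. rho_star G H (S1 y) = T (rho_star G H y)"
    and "\<forall>y\<in>configs (G Mod H) A. rho_star G H (S2 y) = T (rho_star G H y)"
  shows "S1 = S2"
proof
  fix y
  have f1: "S1 \<in> configs (G Mod H) A \<rightarrow>\<^sub>E configs (G Mod H) A"
    using assms(1) unfolding GCA_def phi_CA_def by auto
  have f2: "S2 \<in> configs (G Mod H) A \<rightarrow>\<^sub>E configs (G Mod H) A"
    using assms(2) unfolding GCA_def phi_CA_def by auto
  show "S1 y = S2 y"
  proof (cases "y \<in> configs (G Mod H) A")
    case True
    show ?thesis
      by (rule rho_star_inj) (use True f1 f2 assms(3,4) in auto)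
  next
    case False
    thus ?thesis using f1 f2 by (auto simp: PiE_def extensional_def)
  qed
qed

lemma hat_eq:
  assumes "S \<in> GCA (G Mod H) A"
    and "\<forall>y\<in>configs (G Mod H) A. rho_star G H (S y) = T (rho_star G H y)"
  shows "hatCA G H A T = S"
  unfolding hatCA_def
  by (rule the_equality) (use assms hat_unique in blast)+

lemma rcos_absorb:
  assumes "n \<in> H" "x \<in> carrier G"
  shows "H #> (n \<otimes> x) = H #> x"
  by (metis assms repr_independence rcosI subset is_subgroup)

lemma FG_inv: "g \<in> carrier G \<Longrightarrow> inv\<^bsub>G Mod H\<^esub> (H #> g) = H #> inv g"
  by (simp add: inv_FactGroup rcos_inv carrier_FactGroup)

lemma FG_mult: "a \<in> carrier G \<Longrightarrow> b \<in> carrier G \<Longrightarrow> (H #> a) \<otimes>\<^bsub>G Mod H\<^esub> (H #> b) = H #> (a \<otimes> b)"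
  by (simp add: rcos_sum)

lemma FG_carrier: "g \<in> carrier G \<Longrightarrow> H #> g \<in> carrier (G Mod H)"
  by (simp add: carrier_FactGroup)

lemma FG_cases: "C \<in> carrier (G Mod H) \<Longrightarrow> (\<And>g. g \<in> carrier G \<Longrightarrow> C = H #> g \<Longrightarrow> P) \<Longrightarrow> P"
  by (auto simp: carrier_FactGroup)

lemma hat_exists:
  assumes phi: "\<phi> \<in> hom G G" and inv: "\<phi> ` H \<subseteq> H" and T: "phi_CA G A \<phi> T"
  shows "\<exists>S\<in>GCA (G Mod H) A. \<forall>y\<in>configs (G Mod H) A. rho_star G H (S y) = T (rho_star G H y)"
proof -
  from T obtain S \<mu> where S: "finite S" "S \<subseteq> carrier G"
    and m: "\<forall>x\<in>configs G A. \<forall>h\<in>carrier G.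
           T x h = \<mu> (restrict (shift G (\<phi> (inv h)) x) S)"
    and Tf: "T \<in> configs G A \<rightarrow>\<^sub>E configs G A"
    unfolding phi_CA_def by blast
  have phic: "\<phi> x \<in> carrier G" if "x \<in> carrier G" for x using phi that by (rule hom_in_carrier)
  define ph where "ph = (\<lambda>C. \<Union>g\<in>C. H #> \<phi> g)"
  have ph_eq: "ph (H #> g) = H #> \<phi> g" if g: "g \<in> carrier G" for g
  proof -
    have eq: "H #> \<phi> x = H #> \<phi> g" if "x \<in> H #> g" for x
    proof -
      obtain n where n: "n \<in> H" "x = n \<otimes> g" using \<open>x \<in> H #> g\<close> unfolding r_coset_def by auto
      have nc: "n \<in> carrier G" using n subset by auto
      have "\<phi> x = \<phi> n \<otimes> \<phi> g" using n(2) nc g phi by (simp only: hom_mult)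
      moreover have "\<phi> n \<in> H" using inv n by auto
      ultimately show ?thesis using rcos_absorb[OF _ phic[OF g]] by metis
    qed
    have ne: "g \<in> H #> g" using g by (rule rcos_self) (rule is_subgroup)
    have "ph (H #> g) = (\<Union>x\<in>H #> g. H #> \<phi> g)"
      unfolding ph_def by (rule SUP_cong) (simp_all add: eq)
    also have "\<dots> = H #> \<phi> g" using ne by (simp only: UN_constant) auto
    finally show ?thesis .
  qed
  have ph_hom: "ph \<in> hom (G Mod H) (G Mod H)"
  proof (rule homI)
    fix C assume "C \<in> carrier (G Mod H)"
    then show "ph C \<in> carrier (G Mod H)"
      by (rule FG_cases) (simp add: ph_eq phic FG_carrier)
  next
    fix C D assume C: "C \<in> carrier (G Mod H)" and D: "D \<in> carrier (G Mod H)"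
    from C obtain a where a: "a \<in> carrier G" "C = H #> a" by (rule FG_cases)
    from D obtain b where b: "b \<in> carrier G" "D = H #> b" by (rule FG_cases)
    show "ph (C \<otimes>\<^bsub>G Mod H\<^esub> D) = ph C \<otimes>\<^bsub>G Mod H\<^esub> ph D"
      using a b phic phi by (simp add: rcos_sum ph_eq hom_mult)
  qed
  define Sh where "Sh = (\<lambda>s. H #> s) ` S"
  define mh where "mh = (\<lambda>w. \<mu> (\<lambda>s\<in>S. w (H #> s)))"
  define Th where "Th = (\<lambda>y\<in>configs (G Mod H) A. \<lambda>C\<in>carrier (G Mod H).
      mh (restrict (shift (G Mod H) (ph (inv\<^bsub>G Mod H\<^esub> C)) y) Sh))"
  have key: "Th y (H #> g) = T (rho_star G H y) g"
    if y: "y \<in> configs (G Mod H) A" and g: "g \<in> carrier G" for y g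
  proof -
    have igc: "inv (\<phi> (inv g)) \<in> carrier G" using g phic by simp
    have "Th y (H #> g) = mh (restrict (shift (G Mod H) (ph (inv\<^bsub>G Mod H\<^esub> (H #> g))) y) Sh)"
      unfolding Th_def using y FG_carrier[OF g] by (simp only: restrict_apply')
    also have "\<dots> = \<mu> (\<lambda>s\<in>S. y (H #> (inv (\<phi> (inv g)) \<otimes> s)))"
      unfolding mh_def
    proof (rule arg_cong[where f=\<mu>], rule restrict_ext)
      fix s assume s: "s \<in> S"
      hence sc: "s \<in> carrier G" using S by auto
      have sh: "H #> s \<in> Sh" using s unfolding Sh_def by auto
      have e1: "inv\<^bsub>G Mod H\<^esub> (H #> g) = H #> inv g" using g by (rule FG_inv)
      have e2: "ph (H #> inv g) = H #> \<phi> (inv g)" using g by (intro ph_eq) simp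
      have e3: "inv\<^bsub>G Mod H\<^esub> (H #> \<phi> (inv g)) = H #> inv (\<phi> (inv g))"
        using g phic by (intro FG_inv) simp
      have e4: "(H #> inv (\<phi> (inv g))) \<otimes>\<^bsub>G Mod H\<^esub> (H #> s) = H #> (inv (\<phi> (inv g)) \<otimes> s)"
        using igc sc by (rule FG_mult)
      show "restrict (shift (G Mod H) (ph (inv\<^bsub>G Mod H\<^esub> (H #> g))) y) Sh (H #> s)
          = y (H #> (inv (\<phi> (inv g)) \<otimes> s))"
        unfolding shift_def
        by (simp only: restrict_apply'[OF sh] restrict_apply'[OF FG_carrier[OF sc]] e1 e2 e3 e4)
    qed
    also have "\<dots> = T (rho_star G H y) g"
    proof -
      have "T (rho_star G H y) g = \<mu> (restrict (shift G (\<phi> (inv g)) (rho_star G H y)) S)"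
        using m rho_star_configs[OF y] g by blast
      also have "restrict (shift G (\<phi> (inv g)) (rho_star G H y)) S
          = (\<lambda>s\<in>S. y (H #> (inv (\<phi> (inv g)) \<otimes> s)))"
      proof (rule restrict_ext)
        fix s assume "s \<in> S"
        hence sc: "s \<in> carrier G" using S by auto
        have "inv (\<phi> (inv g)) \<otimes> s \<in> carrier G" using igc sc by simp
        thus "shift G (\<phi> (inv g)) (rho_star G H y) s = y (H #> (inv (\<phi> (inv g)) \<otimes> s))"
          unfolding shift_def rho_star_def using sc by (simp only: restrict_apply')
      qed
      finally show ?thesis by (rule sym)
    qed
    finally show ?thesis .
  qed
  have Tc: "T x \<in> configs G A" if "x \<in> configs G A" for x using Tf that by auto
  have Thf: "Th \<in> configs (G Mod H) A \<rightarrow>\<^sub>E configs (G Mod H) A"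
  proof
    fix y assume y: "y \<in> configs (G Mod H) A"
    show "Th y \<in> configs (G Mod H) A"
      unfolding configs_def
    proof
      fix C assume "C \<in> carrier (G Mod H)"
      then obtain g where g: "g \<in> carrier G" "C = H #> g" by (rule FG_cases)
      have "T (rho_star G H y) g \<in> A"
        using Tc[OF rho_star_configs[OF y]] g unfolding configs_def by auto
      thus "Th y C \<in> A" using key y g by simp
    next
      fix C assume "C \<notin> carrier (G Mod H)"
      thus "Th y C = undefined" using y unfolding Th_def by simp
    qed
  next
    fix y assume "y \<notin> configs (G Mod H) A"
    thus "Th y = undefined" unfolding Th_def by simp
  qed
  have "phi_CA (G Mod H) A ph Th"
    unfolding phi_CA_def
  proof (intro conjI exI[of _ Sh] exI[of _ mh] ballI)
    show "finite Sh" using S unfolding Sh_def by simp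
    show "Sh \<subseteq> carrier (G Mod H)" using S FG_carrier unfolding Sh_def by auto
    fix y C assume "y \<in> configs (G Mod H) A" "C \<in> carrier (G Mod H)"
    thus "Th y C = mh (restrict (shift (G Mod H) (ph (inv\<^bsub>G Mod H\<^esub> C)) y) Sh)"
      unfolding Th_def by simp
  qed (rule Thf)
  hence "Th \<in> GCA (G Mod H) A" using ph_hom unfolding GCA_def by blast
  moreover have "\<forall>y\<in>configs (G Mod H) A. rho_star G H (Th y) = T (rho_star G H y)"
  proof
    fix y assume y: "y \<in> configs (G Mod H) A"
    show "rho_star G H (Th y) = T (rho_star G H y)"
    proof
      fix g show "rho_star G H (Th y) g = T (rho_star G H y) g"
      proof (cases "g \<in> carrier G")
        case True thus ?thesis using key y unfolding rho_star_def by simp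
      next
        case False
        thus ?thesis using Tc[OF rho_star_configs[OF y]] unfolding rho_star_def configs_def
          by (auto simp: PiE_def extensional_def)
      qed
    qed
  qed
  ultimately show ?thesis by blast
qed

end

lemma fully_inv_normal:
  fixes G (structure)
  assumes "group G" "subgroup N G" "\<forall>\<phi>\<in>hom G G. \<phi> ` N \<subseteq> N"
  shows "N \<lhd> G"
proof -
  interpret group G by fact
  have conj_hom: "(\<lambda>z. x \<otimes> z \<otimes> inv x) \<in> hom G G" if x: "x \<in> carrier G" for x
  proof (rule homI)
    fix a assume "a \<in> carrier G" thus "x \<otimes> a \<otimes> inv x \<in> carrier G" using x by simp
  next
    fix a b assume a: "a \<in> carrier G" and b: "b \<in> carrier G"
    have c: "inv x \<in> carrier G" "b \<otimes> inv x \<in> carrier G" using x b by simp_all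
    have "x \<otimes> a \<otimes> inv x \<otimes> (x \<otimes> b \<otimes> inv x) = x \<otimes> (a \<otimes> ((inv x \<otimes> x) \<otimes> (b \<otimes> inv x)))"
      using a b x c by (simp only: m_assoc m_closed)
    also have "\<dots> = x \<otimes> (a \<otimes> (b \<otimes> inv x))" using x c by (simp only: l_inv l_one)
    also have "\<dots> = x \<otimes> (a \<otimes> b) \<otimes> inv x" using a b x c by (simp only: m_assoc m_closed)
    finally show "x \<otimes> (a \<otimes> b) \<otimes> inv x = x \<otimes> a \<otimes> inv x \<otimes> (x \<otimes> b \<otimes> inv x)" by (rule sym)
  qed
  have "N \<lhd> G"
    unfolding normal_inv_iff
  proof (intro conjI ballI)
    show "subgroup N G" by (rule assms(2))
    fix x h assume x: "x \<in> carrier G" and h: "h \<in> N"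
    have "(\<lambda>z. x \<otimes> z \<otimes> inv x) ` N \<subseteq> N" using assms(3) conj_hom[OF x] by (rule bspec)
    moreover have "(\<lambda>z. x \<otimes> z \<otimes> inv x) h \<in> (\<lambda>z. x \<otimes> z \<otimes> inv x) ` N" using h by (rule imageI)
    ultimately show "x \<otimes> h \<otimes> inv x \<in> N" by (rule subsetD)
  qed
  thus ?thesis .
qed

theorem corollary4p4:
  fixes G :: "('g, 'm) monoid_scheme" and N :: "'g set" and A :: "'a set"
  assumes "group G"
    and "finite A" and "card A \<ge> 2"
    and "subgroup N G"
    and "\<forall>\<phi>\<in>hom G G. \<phi> ` N \<subseteq> N"
  shows "hatCA G N A \<in> GCA G A \<rightarrow> GCA (G Mod N) A
    \<and> (\<forall>T1\<in>GCA G A. \<forall>T2\<in>GCA G A.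
           hatCA G N A (compose (configs G A) T1 T2)
             = compose (configs (G Mod N) A) (hatCA G N A T1) (hatCA G N A T2))
    \<and> hatCA G N A (\<lambda>x\<in>configs G A. x) = (\<lambda>y\<in>configs (G Mod N) A. y)"
proof -
  interpret group G by fact
  have "N \<lhd> G" using fully_inv_normal assms(1,4,5) by blast
  then interpret normal N G .
  have QG: "group (G Mod N)" by (rule factorgroup_is_group)
  have spec: "hatCA G N A T \<in> GCA (G Mod N) A \<and>
      (\<forall>y\<in>configs (G Mod N) A. rho_star G N (hatCA G N A T y) = T (rho_star G N y))"
    if T: "T \<in> GCA G A" for T
  proof -
    from T obtain \<phi> where "\<phi> \<in> hom G G" "phi_CA G A \<phi> T" unfolding GCA_def by blast
    with assms(5) obtain S where S: "S \<in> GCA (G Mod N) A"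
      "\<forall>y\<in>configs (G Mod N) A. rho_star G N (S y) = T (rho_star G N y)"
      using hat_exists by blast
    with hat_eq have "hatCA G N A T = S" by blast
    with S show ?thesis by simp
  qed
  have P1: "hatCA G N A \<in> GCA G A \<rightarrow> GCA (G Mod N) A" using spec by blast
  have P2: "hatCA G N A (compose (configs G A) T1 T2)
             = compose (configs (G Mod N) A) (hatCA G N A T1) (hatCA G N A T2)"
    if T1: "T1 \<in> GCA G A" and T2: "T2 \<in> GCA G A" for T1 T2
  proof (rule hat_eq)
    obtain p1 where p1: "p1 \<in> hom (G Mod N) (G Mod N)" "phi_CA (G Mod N) A p1 (hatCA G N A T1)"
      using spec[OF T1] unfolding GCA_def by blast
    obtain p2 where p2: "p2 \<in> hom (G Mod N) (G Mod N)" "phi_CA (G Mod N) A p2 (hatCA G N A T2)"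
      using spec[OF T2] unfolding GCA_def by blast
    have "phi_CA (G Mod N) A (p2 \<circ> p1) (compose (configs (G Mod N) A) (hatCA G N A T1) (hatCA G N A T2))"
      using phi_CA_compose[OF QG p1(1) p2(1) p1(2) p2(2)] .
    moreover have "p2 \<circ> p1 \<in> hom (G Mod N) (G Mod N)" using p1(1) p2(1) by (rule Group.hom_compose)
    ultimately show "compose (configs (G Mod N) A) (hatCA G N A T1) (hatCA G N A T2) \<in> GCA (G Mod N) A"
      unfolding GCA_def by blast
    have f2: "hatCA G N A T2 y \<in> configs (G Mod N) A" if "y \<in> configs (G Mod N) A" for y
      using p2(2) that unfolding phi_CA_def by auto
    show "\<forall>y\<in>configs (G Mod N) A. rho_star G N (compose (configs (G Mod N) A) (hatCA G N A T1) (hatCA G N A T2) y)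
        = compose (configs G A) T1 T2 (rho_star G N y)"
    proof
      fix y assume y: "y \<in> configs (G Mod N) A"
      have "rho_star G N (compose (configs (G Mod N) A) (hatCA G N A T1) (hatCA G N A T2) y)
          = rho_star G N (hatCA G N A T1 (hatCA G N A T2 y))" using y by (simp add: compose_def)
      also have "\<dots> = T1 (rho_star G N (hatCA G N A T2 y))" using spec[OF T1] f2[OF y] by blast
      also have "\<dots> = T1 (T2 (rho_star G N y))" using spec[OF T2] y by simp
      also have "\<dots> = compose (configs G A) T1 T2 (rho_star G N y)"
        using rho_star_configs[OF y] by (simp add: compose_def)
      finally show "rho_star G N (compose (configs (G Mod N) A) (hatCA G N A T1) (hatCA G N A T2) y)
        = compose (configs G A) T1 T2 (rho_star G N y)" .
    qed
  qed
  have P3: "hatCA G N A (\<lambda>x\<in>configs G A. x) = (\<lambda>y\<in>configs (G Mod N) A. y)"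
  proof (rule hat_eq)
    show "(\<lambda>y\<in>configs (G Mod N) A. y) \<in> GCA (G Mod N) A"
      unfolding GCA_def using phi_CA_id[OF QG] id_hom by blast
    show "\<forall>y\<in>configs (G Mod N) A. rho_star G N ((\<lambda>y\<in>configs (G Mod N) A. y) y)
        = (\<lambda>x\<in>configs G A. x) (rho_star G N y)"
      by (simp add: rho_star_configs)
  qed
  show ?thesis using P1 P2 P3 by blast
qed

end
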